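(* Let $p:\mathbb{R}\times\mathbb{R}\to\mathbb{R}$ be measurable with: (1) $p_{\alpha,\beta}>0$ almost everywhere; (2) $p_{\alpha,\beta}=p_{\beta,\alpha}$; (3) $p_{\alpha,\beta}$ is $\pi$-periodic in both arguments; (4) $p$ is essentially bounded. Let $\gamma\in B^\infty_{\rm ap}(\mathbb{R},\mathbb{R}^2)$ be a maximizer of $\omega_p$ over $B^\infty_{\rm ap}(\mathbb{R},\mathbb{R}^2)$, and set $\mu(\alpha)=\int_\alpha^{\alpha+\pi}p_{\alpha,\beta}\gamma(\beta)\,d\beta$. Then $\mu\in L^\infty_{\rm ap}(\mathbb{R},\mathbb{R}^2)$, and for almost every $\alpha$ the vector $\mu(\alpha)$ is orthogonal to $\gamma(\alpha)$ and $\gamma(\alpha)\times\mu(\alpha)\ge0$.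
   Context: For $v,w\in\mathbb{R}^2$, $v\times w=v_1w_2-v_2w_1$. $L^\infty_{\rm ap}(\mathbb{R},\mathbb{R}^2)$ is the space of essentially bounded measurable $\gamma:\mathbb{R}\to\mathbb{R}^2$ with $\gamma(\alpha+\pi)=-\gamma(\alpha)$. $B^\infty_{\rm ap}(\mathbb{R},\mathbb{R}^2)$ is its subset with $\|\gamma_1^2+\gamma_2^2\|_\infty\le1$. For such $\gamma$, \[ \omega_p(\gamma)=\int_0^\pi\int_\alpha^\pi p_{\alpha,\beta}\,\gamma(\alpha)\times\gamma(\beta)\,d\beta\,d\alpha. \] *)

theory Defs
  imports "HOL-Analysis.Analysis"
begin

definition cross2 :: "real \<times> real \<Rightarrow> real \<times> real \<Rightarrow> real" where
  "cross2 v w = fst v * snd w - snd v * fst w"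

text \<open>L-infinity antiperiodic functions (Borel representatives; conditions a.e.).\<close>
definition Linf_ap :: "(real \<Rightarrow> real \<times> real) \<Rightarrow> bool" where
  "Linf_ap g \<longleftrightarrow> g \<in> borel_measurable borel
     \<and> (\<exists>C. AE x in lborel. norm (g x) \<le> C)
     \<and> (AE a in lborel. g (a + pi) = - g a)"

definition Binf_ap :: "(real \<Rightarrow> real \<times> real) \<Rightarrow> bool" where
  "Binf_ap g \<longleftrightarrow> Linf_ap g \<and> (AE x in lborel. (fst (g x))\<^sup>2 + (snd (g x))\<^sup>2 \<le> 1)"

definition omega_p :: "(real \<times> real \<Rightarrow> real) \<Rightarrow> (real \<Rightarrow> real \<times> real) \<Rightarrow> real" where
  "omega_p p g = (LBINT a=0..pi. (LBINT b=a..pi. p (a, b) * cross2 (g a) (g b)))"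

end

theory Submission
  imports Defs
begin


lemma int_bdd:
  fixes f :: "'a::euclidean_space \<Rightarrow> 'b::{banach,second_countable_topology}"
  assumes f: "f \<in> borel_measurable borel" and B: "AE x in lborel. norm (f x) \<le> B"
    and A: "bounded A" "A \<in> sets borel"
  shows "integrable lborel (\<lambda>x. indicator A x *\<^sub>R f x)"
proof (rule Bochner_Integration.integrable_bound[where f="\<lambda>x. indicator A x * \<bar>B\<bar>"])
  show "integrable lborel (\<lambda>x. indicator A x * \<bar>B\<bar>)"
    using A by (auto intro!: emeasure_bounded_finite integrable_mult_left)
  show "(\<lambda>x. indicator A x *\<^sub>R f x) \<in> borel_measurable lborel"
    using A f by measurable
  show "AE x in lborel. norm (indicator A x *\<^sub>R f x) \<le> norm (indicator A x * \<bar>B\<bar>)"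
    using B by eventually_elim (auto split: split_indicator)
qed

lemma cross2_bound: "\<bar>cross2 v w\<bar> \<le> norm v * norm w"
proof -
  obtain a b c d where v: "v = (a,b)" and w: "w = (c,d)" by (cases v, cases w)
  have "(a*d - b*c)^2 \<le> (a^2+b^2)*(c^2+d^2)"
    using sum_squares_ge_zero[of "a*c+b*d" 0] by (simp add: algebra_simps power2_eq_square)
  then have "sqrt ((a*d - b*c)^2) \<le> sqrt ((a^2+b^2)*(c^2+d^2))" by (rule real_sqrt_le_mono)
  then show ?thesis by (simp add: v w cross2_def norm_Pair real_sqrt_mult)
qed

lemma bounded_linear_cross2: "bounded_linear (cross2 v)"
proof (rule bounded_linear_intro[where K="norm v"])
  fix x y :: "real \<times> real" and r :: real
  show "cross2 v (x + y) = cross2 v x + cross2 v y" by (simp add: cross2_def algebra_simps)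
  show "cross2 v (r *\<^sub>R x) = r *\<^sub>R cross2 v x" by (simp add: cross2_def algebra_simps)
  show "norm (cross2 v x) \<le> norm x * norm v" using cross2_bound[of v x] by (simp add: mult.commute)
qed

lemma cross2_add_left: "cross2 (a + b) c = cross2 a c + cross2 b c"
  and cross2_add_right: "cross2 a (b + c) = cross2 a b + cross2 a c"
  and cross2_scale_left: "cross2 (r *\<^sub>R a) c = r * cross2 a c"
  and cross2_scale_right: "cross2 a (r *\<^sub>R c) = r * cross2 a c"
  and cross2_neg_left: "cross2 (- a) c = - cross2 a c"
  and cross2_neg_right: "cross2 a (- c) = - cross2 a c"
  and cross2_swap: "cross2 a c = - cross2 c a"
  by (auto simp: cross2_def algebra_simps)

lemma AE_shift:
  fixes P :: "real \<Rightarrow> bool"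
  assumes "Measurable.pred borel P" "AE x in lborel. P x"
  shows "AE x in lborel. P (x + t)"
  using AE_borel_affine[of 1 P t] assms by (simp add: add.commute)

lemma integral_shift:
  fixes f :: "real \<Rightarrow> 'a :: {banach, second_countable_topology}"
  shows "(\<integral>x. f x \<partial> lborel) = (\<integral>x. f (x + t) \<partial>lborel)"
  using lborel_integral_real_affine[of 1 f t] by (simp add: add.commute)

lemma AE_periodic_ext:
  fixes P :: "real \<Rightarrow> bool"
  assumes P[measurable]: "Measurable.pred borel P"
    and base: "AE a in lborel. a \<in> {0..pi} \<longrightarrow> P a"
    and per: "AE a in lborel. P (a + pi) = P a"
  shows "AE a in lborel. P a"
proof -
  have per': "AE a in lborel. P a = P (a - pi)"
    using AE_shift[OF _ per, of "- pi"] by simp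
  have up: "AE a in lborel. a \<in> {real n * pi..real n * pi + pi} \<longrightarrow> P a" for n
  proof (induction n)
    case 0 then show ?case using base by simp
  next
    case (Suc n)
    have "AE a in lborel. (a - pi) \<in> {real n * pi..real n * pi + pi} \<longrightarrow> P (a - pi)"
      using AE_shift[OF _ Suc, of "- pi"] by simp
    with per' show ?case by eventually_elim (auto simp: algebra_simps)
  qed
  have down: "AE a in lborel. a \<in> {- real n * pi - pi.. - real n * pi} \<longrightarrow> P a" for n
  proof (induction n)
    case 0
    have "AE a in lborel. (a + pi) \<in> {0..pi} \<longrightarrow> P (a + pi)"
      using AE_shift[OF _ base, of "pi"] by simp
    with per show ?case by eventually_elim (auto simp: algebra_simps)
  next
    case (Suc n)
    have "AE a in lborel. (a + pi) \<in> {- real n * pi - pi.. - real n * pi} \<longrightarrow> P (a + pi)"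
      using AE_shift[OF _ Suc, of "pi"] by simp
    with per show ?case by eventually_elim (auto simp: algebra_simps)
  qed
  have "AE a in lborel. \<forall>n::nat. (a \<in> {real n * pi..real n * pi + pi} \<longrightarrow> P a)
     \<and> (a \<in> {- real n * pi - pi.. - real n * pi} \<longrightarrow> P a)"
    using up down by (subst AE_all_countable) auto
  then show ?thesis
  proof eventually_elim
    case (elim a)
    show ?case
    proof (cases "a \<ge> 0")
      case True
      define n where "n = nat \<lfloor>a / pi\<rfloor>"
      have "real n = of_int \<lfloor>a / pi\<rfloor>" using True by (simp add: n_def)
      then have "real n \<le> a / pi" "a / pi < real n + 1" by linarith+
      then have "real n * pi \<le> a" "a \<le> real n * pi + pi"
        by (simp_all add: field_simps)
      then show ?thesis using elim[rule_format, of n] by auto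
    next
      case False
      define n where "n = nat \<lfloor>- a / pi\<rfloor>"
      have "- a / pi \<ge> 0" using False by (simp add: divide_nonpos_pos)
      then have "real n = of_int \<lfloor>- a / pi\<rfloor>" by (simp add: n_def)
      then have "real n \<le> - a / pi" "- a / pi < real n + 1" by linarith+
      then have "real n * pi \<le> - a" "- a \<le> real n * pi + pi"
        by (simp_all add: field_simps)
      then show ?thesis using elim[rule_format, of n] by auto
    qed
  qed
qed



lemma cross2_measurable[measurable]:
  assumes [measurable]: "f \<in> borel_measurable M" "g \<in> borel_measurable M"
  shows "(\<lambda>x. cross2 (f x) (g x)) \<in> borel_measurable M"
proof -
  have [measurable]: "f \<in> M \<rightarrow>\<^sub>M borel \<Otimes>\<^sub>M borel" "g \<in> M \<rightarrow>\<^sub>M borel \<Otimes>\<^sub>M borel"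
    using assms by (simp_all add: borel_prod)
  show ?thesis unfolding cross2_def by measurable
qed

lemma prod_meas_to_borel:
  "(f :: real \<times> real \<Rightarrow> 'b::topological_space) \<in> borel_measurable (lborel \<Otimes>\<^sub>M lborel) \<Longrightarrow> f \<in> borel_measurable borel"
  by (metis lborel_prod measurable_lborel2)

lemma meas_param:
  fixes f :: "real \<Rightarrow> real \<Rightarrow> 'b::{banach,second_countable_topology}"
  assumes "(\<lambda>z. f (fst z) (snd z)) \<in> borel_measurable (lborel \<Otimes>\<^sub>M lborel)"
  shows "(\<lambda>x. \<integral> y. f x y \<partial>lborel) \<in> borel_measurable lborel"
  using assms by (intro lborel.borel_measurable_lebesgue_integral) (simp add: split_beta')

definition bf :: "(real \<Rightarrow> real \<times> real) \<Rightarrow> real \<Rightarrow> bool" where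
  "bf g B \<longleftrightarrow> g \<in> borel_measurable borel \<and> (AE x in lborel. norm (g x) \<le> B)"

lemma AE_fst_prod:
  assumes "AE x in lborel. P x" "Measurable.pred lborel P"
  shows "AE z in lborel \<Otimes>\<^sub>M lborel. P (fst z)"
proof (rule lborel_pair.AE_pair_measure)
  have [measurable]: "Measurable.pred lborel P" by fact
  show "{z \<in> space (lborel \<Otimes>\<^sub>M lborel). P (fst z)} \<in> sets (lborel \<Otimes>\<^sub>M lborel)"
    by measurable
qed (use assms in auto)

lemma AE_snd_prod:
  assumes "AE x in lborel. P x" "Measurable.pred lborel P"
  shows "AE z in lborel \<Otimes>\<^sub>M lborel. P (snd z)"
proof (rule lborel_pair.AE_pair_measure)
  have [measurable]: "Measurable.pred lborel P" by fact
  show "{z \<in> space (lborel \<Otimes>\<^sub>M lborel). P (snd z)} \<in> sets (lborel \<Otimes>\<^sub>M lborel)"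
    by measurable
qed (use assms in auto)

locale pker =
  fixes p :: "real \<times> real \<Rightarrow> real" and C :: real
  assumes p_meas: "p \<in> borel_measurable borel"
    and p_sym: "\<And>a b. p (a, b) = p (b, a)"
    and p_per: "\<And>a b. p (a + pi, b) = p (a, b) \<and> p (a, b + pi) = p (a, b)"
    and p_bdd: "AE z in lborel. \<bar>p z\<bar> \<le> C"
begin

lemma p_meas2[measurable]: "p \<in> borel_measurable (lborel \<Otimes>\<^sub>M lborel)"
  using p_meas by (metis lborel_prod measurable_lborel2)

lemma p_bdd2: "AE z in lborel \<Otimes>\<^sub>M lborel. \<bar>p z\<bar> \<le> C"
  by (subst lborel_prod) (rule p_bdd)

lemma slice: "AE a in lborel. AE b in lborel. \<bar>p (a, b)\<bar> \<le> C"
  using lborel_pair.AE_pair[OF p_bdd2] by simp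

lemma ind_meas[measurable]:
  fixes l u :: "real \<Rightarrow> real"
  assumes "l \<in> borel_measurable borel" "u \<in> borel_measurable borel"
  shows "(\<lambda>z. indicator {l (fst z)..u (fst z)} (snd z) :: real) \<in> borel_measurable (lborel \<Otimes>\<^sub>M lborel)"
proof -
  have l: "l \<in> borel_measurable lborel" and u: "u \<in> borel_measurable lborel" using assms by simp_all
  have s: "snd \<in> borel_measurable (lborel \<Otimes>\<^sub>M lborel :: (real \<times> real) measure)"
    using measurable_snd[of lborel lborel] by simp
  have lf: "(\<lambda>z. l (fst z)) \<in> borel_measurable (lborel \<Otimes>\<^sub>M lborel)"
    by (rule measurable_compose[OF measurable_fst l])
  have uf: "(\<lambda>z. u (fst z)) \<in> borel_measurable (lborel \<Otimes>\<^sub>M lborel)"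
    by (rule measurable_compose[OF measurable_fst u])
  have S1: "{z \<in> space (lborel \<Otimes>\<^sub>M lborel). l (fst z) \<le> snd z} \<in> sets (lborel \<Otimes>\<^sub>M lborel)"
    by (rule borel_measurable_le[OF lf s])
  have S2: "{z \<in> space (lborel \<Otimes>\<^sub>M lborel). snd z \<le> u (fst z)} \<in> sets (lborel \<Otimes>\<^sub>M lborel)"
    by (rule borel_measurable_le[OF s uf])
  have eq: "(\<lambda>z. indicator {l (fst z)..u (fst z)} (snd z) :: real) =
     indicator ({z \<in> space (lborel \<Otimes>\<^sub>M lborel). l (fst z) \<le> snd z} \<inter> {z \<in> space (lborel \<Otimes>\<^sub>M lborel). snd z \<le> u (fst z)})"
    by (auto simp: indicator_def space_pair_measure)
  show ?thesis unfolding eq by (intro borel_measurable_indicator sets.Int S1 S2)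
qed

lemma slice_int:
  assumes k: "bf k B2" and pa: "AE b in lborel. \<bar>p (a, b)\<bar> \<le> C"
  shows "integrable lborel (\<lambda>b. (indicator {x..y} b * p (a, b)) *\<^sub>R k b)"
proof -
  have [measurable]: "k \<in> borel_measurable borel" using k by (simp add: bf_def)
  have "integrable lborel (\<lambda>b. indicator {x..y} b *\<^sub>R (p (a, b) *\<^sub>R k b))"
  proof (rule int_bdd[where B="C * B2"])
    show "(\<lambda>b. p (a, b) *\<^sub>R k b) \<in> borel_measurable borel" by measurable
    show "AE b in lborel. norm (p (a, b) *\<^sub>R k b) \<le> C * B2"
      using pa conjunct2[OF k[unfolded bf_def]]
    proof eventually_elim
      case (elim b)
      then show ?case by (auto intro!: mult_mono)
    qed
  qed auto
  then show ?thesis by simp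
qed

lemma iter:
  assumes h: "bf h B1" and k: "bf k B2"
    and l[measurable]: "l \<in> borel_measurable borel" and u[measurable]: "u \<in> borel_measurable borel"
    and lu: "\<And>a. a \<in> {0..pi} \<Longrightarrow> 0 \<le> l a \<and> u a \<le> pi"
  defines "F \<equiv> \<lambda>z. indicator {0..pi} (fst z) * indicator {l (fst z)..u (fst z)} (snd z) * p z * cross2 (h (fst z)) (k (snd z))"
    and "N \<equiv> \<lambda>a. \<integral> b. (indicator {l a..u a} b * p (a, b)) *\<^sub>R k b \<partial>lborel"
  shows "integrable (lborel \<Otimes>\<^sub>M lborel) F"
    and "integral\<^sup>L (lborel \<Otimes>\<^sub>M lborel) F = (\<integral> a. indicator {0..pi} a * cross2 (h a) (N a) \<partial>lborel)"
    and "integrable lborel (\<lambda>a. indicator {0..pi} a * cross2 (h a) (N a))"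
proof -
  have [measurable]: "h \<in> borel_measurable borel" "k \<in> borel_measurable borel"
    using h k by (simp_all add: bf_def)
  have [measurable]: "h \<in> borel_measurable lborel" "k \<in> borel_measurable lborel"
    "l \<in> borel_measurable lborel" "u \<in> borel_measurable lborel"
    using h k l u by (simp_all add: bf_def)
  have Fm[measurable]: "F \<in> borel_measurable (lborel \<Otimes>\<^sub>M lborel)"
    unfolding F_def by measurable
  have hA: "AE z in lborel \<Otimes>\<^sub>M lborel. norm (h (fst z)) \<le> B1"
    using h by (intro AE_fst_prod) (auto simp: bf_def)
  have kA: "AE z in lborel \<Otimes>\<^sub>M lborel. norm (k (snd z)) \<le> B2"
    using k by (intro AE_snd_prod) (auto simp: bf_def)
  have FB: "AE z in lborel \<Otimes>\<^sub>M lborel. norm (F z) \<le> C * (B1 * B2)"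
    using hA kA p_bdd2
  proof eventually_elim
    case (elim z)
    have "0 \<le> B1" "0 \<le> B2" using elim by (meson norm_ge_zero order_trans)+
    have "norm (F z) \<le> \<bar>p z\<bar> * (norm (h (fst z)) * norm (k (snd z)))"
      using cross2_bound[of "h (fst z)" "k (snd z)"]
      by (auto simp: F_def abs_mult split: split_indicator intro!: mult_left_mono)
    also have "\<dots> \<le> C * (B1 * B2)"
      using elim \<open>0 \<le> B1\<close> \<open>0 \<le> B2\<close> by (intro mult_mono) (auto intro!: mult_mono)
    finally show ?case .
  qed
  have "integrable lborel (\<lambda>z. indicator ({0..pi} \<times> {0..pi}) z *\<^sub>R F z)"
  proof (rule int_bdd[where B="C * (B1 * B2)"])
    show "F \<in> borel_measurable borel" using Fm by (rule prod_meas_to_borel)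
    show "AE x in lborel. norm (F x) \<le> C * (B1 * B2)" using FB unfolding lborel_prod .
    show "bounded ({0..pi} \<times> {0..pi::real})" by (auto intro!: bounded_Times)
    show "{0..pi} \<times> {0..pi::real} \<in> sets borel" by (auto intro!: borel_closed closed_Times)
  qed
  moreover have "(\<lambda>z. indicator ({0..pi} \<times> {0..pi}) z *\<^sub>R F z) = F"
  proof
    fix z show "indicator ({0..pi} \<times> {0..pi}) z *\<^sub>R F z = F z"
      using lu[of "fst z"] by (cases z) (auto simp: F_def split: split_indicator)
  qed
  ultimately show Fi: "integrable (lborel \<Otimes>\<^sub>M lborel) F" unfolding lborel_prod by simp
  have Nm[measurable]: "N \<in> borel_measurable lborel"
    unfolding N_def by (rule meas_param) measurable
  have AEeq: "AE a in lborel. (\<integral> b. F (a, b) \<partial>lborel) = indicator {0..pi} a * cross2 (h a) (N a)"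
    using slice
  proof eventually_elim
    case (elim a)
    show ?case
    proof (cases "a \<in> {0..pi}")
      case True
      have "(\<integral> b. F (a, b) \<partial>lborel) = (\<integral> b. cross2 (h a) ((indicator {l a..u a} b * p (a, b)) *\<^sub>R k b) \<partial>lborel)"
        using True by (intro Bochner_Integration.integral_cong) (auto simp: F_def cross2_scale_right)
      also have "\<dots> = cross2 (h a) (N a)"
        unfolding N_def by (intro integral_bounded_linear bounded_linear_cross2 slice_int[OF k elim])
      finally show ?thesis using True by simp
    qed (simp add: F_def)
  qed
  have m1: "(\<lambda>x. \<integral> y. F (x, y) \<partial>lborel) \<in> borel_measurable lborel"
    by (rule meas_param) simp
  have m2: "(\<lambda>a. indicator {0..pi} a * cross2 (h a) (N a)) \<in> borel_measurable lborel"
    by measurable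
  show "integral\<^sup>L (lborel \<Otimes>\<^sub>M lborel) F = (\<integral> a. indicator {0..pi} a * cross2 (h a) (N a) \<partial>lborel)"
    unfolding lborel_pair.integral_fst'[OF Fi, symmetric]
    by (intro integral_cong_AE AEeq m1 m2)
  show "integrable lborel (\<lambda>a. indicator {0..pi} a * cross2 (h a) (N a))"
    using lborel_pair.integrable_fst'[OF Fi]
    by (rule integrable_cong_AE_imp) (use AEeq m2 in auto)
qed

end



context pker begin

definition Q :: "(real \<Rightarrow> real \<times> real) \<Rightarrow> (real \<Rightarrow> real \<times> real) \<Rightarrow> real" where
  "Q g h = (\<integral> z. indicator {0..pi} (fst z) * indicator {fst z..pi} (snd z) * p z * cross2 (g (fst z)) (h (snd z)) \<partial>(lborel \<Otimes>\<^sub>M lborel))"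

definition mu :: "(real \<Rightarrow> real \<times> real) \<Rightarrow> real \<Rightarrow> real \<times> real" where
  "mu g a = (LBINT b=a..a+pi. p (a, b) *\<^sub>R g b)"

lemma Q_int:
  assumes "bf g B1" "bf h B2"
  shows "integrable (lborel \<Otimes>\<^sub>M lborel) (\<lambda>z. indicator {0..pi} (fst z) * indicator {fst z..pi} (snd z) * p z * cross2 (g (fst z)) (h (snd z)))"
  using iter(1)[OF assms, of "\<lambda>a. a" "\<lambda>a. pi"] by simp

lemma W:
  assumes g: "bf g B"
  shows "omega_p p g = Q g g"
proof -
  have "omega_p p g = (\<integral> a. indicator {0..pi} a *\<^sub>R (LBINT b=a..pi. p (a, b) * cross2 (g a) (g b)) \<partial>lborel)"
  proof -
    have I0: "(LBINT x=0..pi. f x) = (LBINT x:{0..pi}. f x)" for f :: "real \<Rightarrow> real"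
      by (subst zero_ereal_def) (rule interval_integral_Icc, simp)
    show ?thesis unfolding omega_p_def I0 by (simp add: set_lebesgue_integral_def)
  qed
  also have "\<dots> = (\<integral> a. \<integral> b. indicator {0..pi} a * indicator {a..pi} b * p (a, b) * cross2 (g a) (g b) \<partial>lborel \<partial>lborel)"
  proof (intro Bochner_Integration.integral_cong refl)
    fix a show "indicator {0..pi} a *\<^sub>R (LBINT b=a..pi. p (a, b) * cross2 (g a) (g b)) =
      (\<integral> b. indicator {0..pi} a * indicator {a..pi} b * p (a, b) * cross2 (g a) (g b) \<partial>lborel)"
    proof (cases "a \<in> {0..pi}")
      case True
      then show ?thesis
        by (simp add: interval_integral_Icc set_lebesgue_integral_def mult.assoc)
    qed simp
  qed
  also have "\<dots> = Q g g"
    unfolding Q_def using lborel_pair.integral_fst'[OF Q_int[OF g g]] by simp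
  finally show ?thesis .
qed

lemma bf_add: "bf g B1 \<Longrightarrow> bf h B2 \<Longrightarrow> bf (\<lambda>x. g x + h x) (B1 + B2)"
  unfolding bf_def
proof (elim conjE, intro conjI)
  assume "AE x in lborel. norm (g x) \<le> B1" "AE x in lborel. norm (h x) \<le> B2"
  then show "AE x in lborel. norm (g x + h x) \<le> B1 + B2"
    by eventually_elim (meson add_mono norm_triangle_ineq order_trans)
qed auto

lemma bf_neg: "bf g B \<Longrightarrow> bf (\<lambda>x. - g x) B"
  unfolding bf_def by auto

lemma expand:
  assumes g: "bf g B1" and h: "bf h B2"
  shows "omega_p p (\<lambda>x. g x + h x) = Q g g + Q g h + Q h g + Q h h"
proof -
  have "omega_p p (\<lambda>x. g x + h x) = Q (\<lambda>x. g x + h x) (\<lambda>x. g x + h x)"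
    by (rule W[OF bf_add[OF g h]])
  also have "\<dots> = Q g g + Q g h + Q h g + Q h h"
  proof -
    define F where "F = (\<lambda>u v (z::real\<times>real). indicator {0..pi} (fst z) * indicator {fst z..pi} (snd z) * p z * cross2 (u (fst z)) (v (snd z)) :: real)"
    have QF: "Q u v = integral\<^sup>L (lborel \<Otimes>\<^sub>M lborel) (F u v)" for u v unfolding Q_def F_def ..
    have pt: "F (\<lambda>x. g x + h x) (\<lambda>x. g x + h x) z = (F g g z + F g h z) + (F h g z + F h h z)" for z
      unfolding F_def cross2_add_left cross2_add_right by (simp only: distrib_left add.assoc)
    have i: "integrable (lborel \<Otimes>\<^sub>M lborel) (F u v)" if "bf u B" "bf v B'" for u v B B'
      unfolding F_def using Q_int[OF that] .
    have "Q (\<lambda>x. g x + h x) (\<lambda>x. g x + h x) = integral\<^sup>L (lborel \<Otimes>\<^sub>M lborel) (\<lambda>z. (F g g z + F g h z) + (F h g z + F h h z))"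
      unfolding QF pt ..
    also have "\<dots> = (integral\<^sup>L (lborel \<Otimes>\<^sub>M lborel) (F g g) + integral\<^sup>L (lborel \<Otimes>\<^sub>M lborel) (F g h)) +
       (integral\<^sup>L (lborel \<Otimes>\<^sub>M lborel) (F h g) + integral\<^sup>L (lborel \<Otimes>\<^sub>M lborel) (F h h))"
      by (rule trans[OF Bochner_Integration.integral_add[OF Bochner_Integration.integrable_add[OF i[OF g g] i[OF g h]] Bochner_Integration.integrable_add[OF i[OF h g] i[OF h h]]]],
          rule arg_cong2[where f="(+)"], rule Bochner_Integration.integral_add[OF i[OF g g] i[OF g h]],
          rule Bochner_Integration.integral_add[OF i[OF h g] i[OF h h]])
    finally show ?thesis unfolding QF by (simp only: add.assoc)
  qed
  finally show ?thesis .
qed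

lemma Qhg:
  assumes g: "bf g B1" and h: "bf h B2"
  shows "Q h g = (\<integral> a. indicator {0..pi} a * cross2 (h a) (\<integral> b. (indicator {a..pi} b * p (a, b)) *\<^sub>R g b \<partial>lborel) \<partial>lborel)"
  using iter(2)[OF h g, of "\<lambda>a. a" "\<lambda>a. pi"] by (simp add: Q_def)

lemma Qgh:
  assumes g: "bf g B1" and h: "bf h B2"
  shows "Q g h = (\<integral> a. indicator {0..pi} a * cross2 (h a) (\<integral> b. (indicator {0..a} b * p (a, b)) *\<^sub>R (- g b) \<partial>lborel) \<partial>lborel)"
proof -
  let ?G = "\<lambda>z. indicator {0..pi} (fst z) * indicator {fst z..pi} (snd z) * p z * cross2 (g (fst z)) (h (snd z))"
  have Gm: "?G \<in> borel_measurable (lborel \<Otimes>\<^sub>M lborel)"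
    using Q_int[OF g h] by (rule borel_measurable_integrable)
  have "Q g h = (\<integral>(x,y). ?G (y,x) \<partial>(lborel \<Otimes>\<^sub>M lborel))"
    unfolding Q_def by (rule lborel_pair.integral_product_swap[OF Gm, symmetric])
  also have "\<dots> = (\<integral> z. indicator {0..pi} (fst z) * indicator {0..fst z} (snd z) * p z * cross2 (h (fst z)) (- g (snd z)) \<partial>(lborel \<Otimes>\<^sub>M lborel))"
  proof (intro Bochner_Integration.integral_cong refl)
    fix z :: "real \<times> real"
    obtain x y where z: "z = (x, y)" by (cases z)
    show "(case z of (x, y) \<Rightarrow> ?G (y, x)) = indicator {0..pi} (fst z) * indicator {0..fst z} (snd z) * p z * cross2 (h (fst z)) (- g (snd z))"
    proof -
      have ind: "indicator {0..pi} y * indicator {y..pi} x = (indicator {0..pi} x * indicator {0..x} y :: real)"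
        by (auto simp: indicator_def)
      have cr: "cross2 (g y) (h x) = cross2 (h x) (- g y)" by (simp add: cross2_def)
      show ?thesis unfolding z by (simp only: fst_conv snd_conv prod.case ind cr p_sym[of y x])
    qed
  qed
  also have "\<dots> = (\<integral> a. indicator {0..pi} a * cross2 (h a) (\<integral> b. (indicator {0..a} b * p (a, b)) *\<^sub>R (- g b) \<partial>lborel) \<partial>lborel)"
  proof -
    have m0: "(\<lambda>a. 0::real) \<in> borel_measurable borel" "(\<lambda>a. a::real) \<in> borel_measurable borel" by simp_all
    have lu: "\<And>a. a \<in> {0..pi} \<Longrightarrow> 0 \<le> (0::real) \<and> a \<le> pi" by auto
    show ?thesis by (rule iter(2)[OF h bf_neg[OF g] m0 lu])
  qed
  finally show ?thesis .
qed

end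



context pker begin

lemma nu_shift:
  assumes g: "bf g B" and anti: "AE x in lborel. g (x + pi) = - g x"
  shows "(\<integral> b. (indicator {0..a} b * p (a, b)) *\<^sub>R (- g b) \<partial>lborel) = (\<integral> b. (indicator {pi..a+pi} b * p (a, b)) *\<^sub>R g b \<partial>lborel)"
proof -
  have [measurable]: "g \<in> borel_measurable borel" using g by (simp add: bf_def)
  have "(\<integral> b. (indicator {pi..a+pi} b * p (a, b)) *\<^sub>R g b \<partial>lborel) = (\<integral> x. (indicator {pi..a+pi} (x+pi) * p (a, x+pi)) *\<^sub>R g (x+pi) \<partial>lborel)"
    by (rule integral_shift)
  also have "\<dots> = (\<integral> x. (indicator {0..a} x * p (a, x)) *\<^sub>R g (x+pi) \<partial>lborel)"
    by (intro Bochner_Integration.integral_cong refl) (auto simp: p_per indicator_def)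
  also have "\<dots> = (\<integral> x. (indicator {0..a} x * p (a, x)) *\<^sub>R (- g x) \<partial>lborel)"
  proof (rule integral_cong_AE)
    show "(\<lambda>x. (indicator {0..a} x * p (a, x)) *\<^sub>R g (x + pi)) \<in> borel_measurable lborel" by measurable
    show "(\<lambda>x. (indicator {0..a} x * p (a, x)) *\<^sub>R (- g x)) \<in> borel_measurable lborel" by measurable
    show "AE x in lborel. (indicator {0..a} x * p (a, x)) *\<^sub>R g (x + pi) = (indicator {0..a} x * p (a, x)) *\<^sub>R (- g x)"
      using anti by eventually_elim simp
  qed
  finally show ?thesis ..
qed

lemma mu_alt: "mu g a = (\<integral> b. indicator {a..a+pi} b *\<^sub>R (p (a, b) *\<^sub>R g b) \<partial>lborel)"
  unfolding mu_def by (simp add: interval_integral_Icc set_lebesgue_integral_def)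

lemma mu_meas:
  assumes g: "bf g B" shows "mu g \<in> borel_measurable borel"
proof -
  have [measurable]: "g \<in> borel_measurable borel" using g by (simp add: bf_def)
  have [measurable]: "(\<lambda>a. a + pi) \<in> borel_measurable (borel :: real measure)" by simp
  have [measurable]: "(\<lambda>z. indicator {fst z..fst z + pi} (snd z) :: real) \<in> borel_measurable (lborel \<Otimes>\<^sub>M lborel)"
    using ind_meas[of "\<lambda>a. a" "\<lambda>a. a + pi"] by simp
  have "(\<lambda>a. \<integral> b. indicator {a..a+pi} b *\<^sub>R (p (a, b) *\<^sub>R g b) \<partial>lborel) \<in> borel_measurable lborel"
    by (rule meas_param) measurable
  then show ?thesis by (simp add: mu_alt[abs_def])
qed

lemma mu_bdd:
  assumes g: "bf g B" shows "AE a in lborel. norm (mu g a) \<le> \<bar>C\<bar> * \<bar>B\<bar> * pi"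
  using slice
proof eventually_elim
  case (elim a)
  have [measurable]: "g \<in> borel_measurable borel" using g by (simp add: bf_def)
  have "norm (mu g a) \<le> (\<integral> b. norm (indicator {a..a+pi} b *\<^sub>R (p (a, b) *\<^sub>R g b)) \<partial>lborel)"
    unfolding mu_alt by (rule integral_norm_bound)
  also have "\<dots> \<le> (\<integral> b. indicator {a..a+pi} b * (\<bar>C\<bar> * \<bar>B\<bar>) \<partial>lborel)"
  proof (rule integral_mono_AE')
    show "integrable lborel (\<lambda>b. indicator {a..a+pi} b * (\<bar>C\<bar> * \<bar>B\<bar>) :: real)"
      by (intro integrable_mult_left integrable_real_indicator) auto
    show "AE b in lborel. norm (indicator {a..a+pi} b *\<^sub>R (p (a, b) *\<^sub>R g b)) \<le> indicator {a..a+pi} b * (\<bar>C\<bar> * \<bar>B\<bar>)"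
      using elim conjunct2[OF g[unfolded bf_def]]
    proof eventually_elim
      case (elim b)
      have "\<bar>p (a, b)\<bar> * norm (g b) \<le> \<bar>C\<bar> * \<bar>B\<bar>"
        using elim by (intro mult_mono) auto
      then show ?case by (auto split: split_indicator)
    qed
  qed auto
  also have "\<dots> = \<bar>C\<bar> * \<bar>B\<bar> * pi" by simp
  finally show ?case .
qed

lemma mu_anti:
  assumes g: "bf g B" and anti: "AE x in lborel. g (x + pi) = - g x"
  shows "mu g (a + pi) = - mu g a"
proof -
  have [measurable]: "g \<in> borel_measurable borel" using g by (simp add: bf_def)
  have "mu g (a + pi) = (\<integral> x. indicator {a+pi..a+pi+pi} (x+pi) *\<^sub>R (p (a+pi, x+pi) *\<^sub>R g (x+pi)) \<partial>lborel)"
    unfolding mu_alt by (rule integral_shift)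
  also have "\<dots> = (\<integral> x. indicator {a..a+pi} x *\<^sub>R (p (a, x) *\<^sub>R g (x+pi)) \<partial>lborel)"
    by (intro Bochner_Integration.integral_cong refl) (auto simp: p_per indicator_def)
  also have "\<dots> = (\<integral> x. - (indicator {a..a+pi} x *\<^sub>R (p (a, x) *\<^sub>R g x)) \<partial>lborel)"
  proof (rule integral_cong_AE)
    show "(\<lambda>x. indicator {a..a+pi} x *\<^sub>R (p (a, x) *\<^sub>R g (x+pi))) \<in> borel_measurable lborel" by measurable
    show "(\<lambda>x. - (indicator {a..a+pi} x *\<^sub>R (p (a, x) *\<^sub>R g x))) \<in> borel_measurable lborel" by measurable
    show "AE x in lborel. indicator {a..a+pi} x *\<^sub>R (p (a, x) *\<^sub>R g (x+pi)) = - (indicator {a..a+pi} x *\<^sub>R (p (a, x) *\<^sub>R g x))"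
      using anti by eventually_elim simp
  qed
  also have "\<dots> = - mu g a" unfolding mu_alt by (rule integral_minus)
  finally show ?thesis .
qed

end



context pker begin

lemma main_expand:
  assumes g: "bf g B1" and h: "bf h B2" and anti: "AE x in lborel. g (x + pi) = - g x"
  shows "omega_p p (\<lambda>x. g x + h x) = omega_p p g + omega_p p h + (\<integral> a. indicator {0..pi} a * cross2 (h a) (mu g a) \<partial>lborel)"
proof -
  have [measurable]: "g \<in> borel_measurable borel" "h \<in> borel_measurable borel" using g h by (simp_all add: bf_def)
  have [measurable]: "mu g \<in> borel_measurable borel" by (rule mu_meas[OF g])
  define N1 where "N1 = (\<lambda>a. \<integral> b. (indicator {a..pi} b * p (a, b)) *\<^sub>R g b \<partial>lborel)"
  define N2 where "N2 = (\<lambda>a. \<integral> b. (indicator {0..a} b * p (a, b)) *\<^sub>R (- g b) \<partial>lborel)"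
  have m: "(\<lambda>a. 0::real) \<in> borel_measurable borel" "(\<lambda>a. a::real) \<in> borel_measurable borel"
    "(\<lambda>a. pi::real) \<in> borel_measurable borel" by simp_all
  have lu1: "\<And>a. a \<in> {0..pi} \<Longrightarrow> 0 \<le> a \<and> pi \<le> pi" by auto
  have lu2: "\<And>a. a \<in> {0..pi} \<Longrightarrow> 0 \<le> (0::real) \<and> a \<le> pi" by auto
  have I1: "integrable lborel (\<lambda>a. indicator {0..pi} a * cross2 (h a) (N1 a))"
    unfolding N1_def by (rule iter(3)[OF h g m(2) m(3) lu1])
  have I2: "integrable lborel (\<lambda>a. indicator {0..pi} a * cross2 (h a) (N2 a))"
    unfolding N2_def by (rule iter(3)[OF h bf_neg[OF g] m(1) m(2) lu2])
  have Q1: "Q h g = (\<integral> a. indicator {0..pi} a * cross2 (h a) (N1 a) \<partial>lborel)"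
    unfolding N1_def by (rule Qhg[OF g h])
  have Q2: "Q g h = (\<integral> a. indicator {0..pi} a * cross2 (h a) (N2 a) \<partial>lborel)"
    unfolding N2_def by (rule Qgh[OF g h])
  have "Q g h + Q h g = (\<integral> a. indicator {0..pi} a * cross2 (h a) (N2 a) + indicator {0..pi} a * cross2 (h a) (N1 a) \<partial>lborel)"
    unfolding Q1 Q2 by (rule Bochner_Integration.integral_add[symmetric, OF I2 I1])
  also have "\<dots> = (\<integral> a. indicator {0..pi} a * cross2 (h a) (mu g a) \<partial>lborel)"
  proof (rule integral_cong_AE)
    show "(\<lambda>a. indicator {0..pi} a * cross2 (h a) (N2 a) + indicator {0..pi} a * cross2 (h a) (N1 a)) \<in> borel_measurable lborel"
      by (rule borel_measurable_integrable[OF Bochner_Integration.integrable_add[OF I2 I1]])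
    show "(\<lambda>a. indicator {0..pi} a * cross2 (h a) (mu g a)) \<in> borel_measurable lborel"
      by measurable
    show "AE a in lborel. indicator {0..pi} a * cross2 (h a) (N2 a) + indicator {0..pi} a * cross2 (h a) (N1 a) =
        indicator {0..pi} a * cross2 (h a) (mu g a)"
      using slice
    proof eventually_elim
      case (elim a)
      show ?case
      proof (cases "a \<in> {0..pi}")
        case True
        have e2: "N2 a = (\<integral> b. (indicator {pi..a+pi} b * p (a, b)) *\<^sub>R g b \<partial>lborel)"
          unfolding N2_def by (rule nu_shift[OF g anti])
        have "N1 a + N2 a = (\<integral> b. (indicator {a..pi} b * p (a, b)) *\<^sub>R g b + (indicator {pi..a+pi} b * p (a, b)) *\<^sub>R g b \<partial>lborel)"
          unfolding N1_def e2 by (rule Bochner_Integration.integral_add[symmetric, OF slice_int[OF g elim] slice_int[OF g elim]])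
        also have "\<dots> = (\<integral> b. indicator {a..a+pi} b *\<^sub>R (p (a, b) *\<^sub>R g b) \<partial>lborel)"
        proof (rule integral_cong_AE)
          show "(\<lambda>b. (indicator {a..pi} b * p (a, b)) *\<^sub>R g b + (indicator {pi..a+pi} b * p (a, b)) *\<^sub>R g b) \<in> borel_measurable lborel"
            by measurable
          show "(\<lambda>b. indicator {a..a+pi} b *\<^sub>R (p (a, b) *\<^sub>R g b)) \<in> borel_measurable lborel"
            by measurable
          show "AE b in lborel. (indicator {a..pi} b * p (a, b)) *\<^sub>R g b + (indicator {pi..a+pi} b * p (a, b)) *\<^sub>R g b =
              indicator {a..a+pi} b *\<^sub>R (p (a, b) *\<^sub>R g b)"
            using AE_lborel_singleton[of pi]
          proof eventually_elim
            case (elim b)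
            have ii: "indicator {a..pi} b + indicator {pi..a+pi} b = (indicator {a..a+pi} b :: real)"
              using True elim by (auto simp: indicator_def)
            have "(indicator {a..pi} b * p (a, b)) *\<^sub>R g b + (indicator {pi..a+pi} b * p (a, b)) *\<^sub>R g b =
                ((indicator {a..pi} b + indicator {pi..a+pi} b) * p (a, b)) *\<^sub>R g b"
              by (simp only: distrib_right scaleR_add_left)
            then show ?case unfolding ii by simp
          qed
        qed
        also have "\<dots> = mu g a" by (rule mu_alt[symmetric])
        finally have "N1 a + N2 a = mu g a" .
        then show ?thesis
          by (simp add: cross2_add_right[symmetric] distrib_left[symmetric] add.commute)
      qed simp
    qed
  qed
  finally have QQ: "Q g h + Q h g = (\<integral> a. indicator {0..pi} a * cross2 (h a) (mu g a) \<partial>lborel)" .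
  show ?thesis
    unfolding expand[OF g h] W[OF g] W[OF h] QQ[symmetric] by simp
qed

end



definition J :: "real \<times> real \<Rightarrow> real \<times> real" where "J v = (- snd v, fst v)"

lemma J_meas[measurable]:
  assumes "f \<in> borel_measurable M" shows "(\<lambda>x. J (f x)) \<in> borel_measurable M"
proof -
  have [measurable]: "f \<in> M \<rightarrow>\<^sub>M borel \<Otimes>\<^sub>M borel" using assms by (simp add: borel_prod)
  have "(\<lambda>x. J (f x)) \<in> M \<rightarrow>\<^sub>M borel \<Otimes>\<^sub>M borel" unfolding J_def by measurable
  then show ?thesis by (simp add: borel_prod)
qed

lemma cross2_J: "cross2 (J v) m = - (v \<bullet> m)"
  by (cases v, cases m) (simp add: J_def cross2_def inner_Pair)

lemma J_neg: "J (- v) = - J v" by (simp add: J_def)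

lemma norm_J: "norm (J v) = norm v"
  by (cases v) (simp add: J_def norm_Pair)

lemma norm_sq_pair: "norm v = sqrt (fst v ^ 2 + snd v ^ 2)"
  by (cases v) (simp add: norm_Pair)

lemma comp_norm:
  fixes v :: "real \<times> real"
  assumes v: "norm v \<le> 1" and t: "0 < t" "t \<le> 1/2" and s: "\<sigma> = 0 \<or> \<sigma> = 1" and th: "\<bar>\<theta>\<bar> \<le> 1"
  defines "w \<equiv> (1 - t^2 - t * \<sigma>) *\<^sub>R v + (t * \<theta>) *\<^sub>R J v"
  shows "(fst w)\<^sup>2 + (snd w)\<^sup>2 \<le> 1"
proof -
  define S where "S = 1 - t^2 - t * \<sigma>"
  define c where "c = t * \<theta>"
  have e: "(fst w)\<^sup>2 + (snd w)\<^sup>2 = (S^2 + c^2) * ((fst v)\<^sup>2 + (snd v)\<^sup>2)"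
    unfolding w_def S_def[symmetric] c_def[symmetric] by (cases v) (simp add: J_def power2_eq_square algebra_simps)
  have "(fst v)\<^sup>2 + (snd v)\<^sup>2 \<le> 1" using v by (simp add: norm_sq_pair)
  moreover have "0 \<le> (fst v)\<^sup>2 + (snd v)\<^sup>2" by simp
  moreover have "c^2 \<le> t^2"
  proof -
    have "\<theta>^2 \<le> 1" using th abs_square_le_1[of \<theta>] by simp
    then have "\<theta>^2 * t^2 \<le> 1 * t^2" by (intro mult_right_mono) auto
    then show ?thesis unfolding c_def by (simp add: power_mult_distrib mult.commute)
  qed
  moreover have "S^2 + t^2 \<le> 1"
    using s
  proof
    assume "\<sigma> = 0"
    then have "S = 1 - t^2" by (simp add: S_def)
    moreover have "t^2 \<le> 1" using t by (simp add: power_le_one)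
    then have "t^2 * t^2 \<le> t^2 * 1" by (intro mult_left_mono) auto
    moreover have "S^2 + t^2 = 1 - t^2 + t^2 * t^2" unfolding \<open>S = 1 - t^2\<close> by (simp add: power2_eq_square algebra_simps)
    ultimately show ?thesis by linarith
  next
    assume "\<sigma> = 1"
    then have S: "S = 1 - t - t^2" by (simp add: S_def)
    have "t * t \<le> (1/2) * (1/2)" using t by (intro mult_mono) auto
    then have tt: "t^2 \<le> 1/4" by (simp add: power2_eq_square)
    have "0 \<le> S" unfolding S using t tt by linarith
    moreover have "S \<le> 1 - t" unfolding S by simp
    ultimately have "0 \<le> S" "S \<le> 1 - t" by auto
    then have "S^2 \<le> (1 - t)^2" by (simp add: power_mono)
    moreover have "t * t \<le> t * 1" using t by (intro mult_left_mono) auto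
    moreover have "(1-t)^2 = 1 - 2*t + t*t" "t^2 = t*t" by (simp_all add: power2_eq_square algebra_simps)
    ultimately show ?thesis by linarith
  qed
  ultimately have "(S^2 + c^2) * ((fst v)\<^sup>2 + (snd v)\<^sup>2) \<le> 1 * 1"
    by (intro mult_mono) auto
  then show ?thesis using e by simp
qed

context pker begin

lemma Q_scale: "Q (\<lambda>a. t *\<^sub>R v a) (\<lambda>a. t *\<^sub>R v a) = t * t * Q v v"
proof -
  have "(\<lambda>z. indicator {0..pi} (fst z) * indicator {fst z..pi} (snd z) * p z * cross2 (t *\<^sub>R v (fst z)) (t *\<^sub>R v (snd z))) =
      (\<lambda>z. (t * t) * (indicator {0..pi} (fst z) * indicator {fst z..pi} (snd z) * p z * cross2 (v (fst z)) (v (snd z))))"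
    by (simp add: cross2_scale_left cross2_scale_right fun_eq_iff mult_ac)
  then show ?thesis unfolding Q_def by simp
qed

lemma Qbound:
  assumes h: "bf h B1" and k: "bf k B2"
  shows "\<bar>Q h k\<bar> \<le> (\<integral> z. indicator ({0..pi} \<times> {0..pi}) z * (\<bar>C\<bar> * (\<bar>B1\<bar> * \<bar>B2\<bar>)) \<partial>(lborel \<Otimes>\<^sub>M lborel))"
proof -
  define F where "F = (\<lambda>z. indicator {0..pi} (fst z) * indicator {fst z..pi} (snd z) * p z * cross2 (h (fst z)) (k (snd z)))"
  have [measurable]: "h \<in> borel_measurable lborel" "k \<in> borel_measurable lborel"
    using h k by (simp_all add: bf_def)
  have hA: "AE z in lborel \<Otimes>\<^sub>M lborel. norm (h (fst z)) \<le> B1"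
    using h by (intro AE_fst_prod) (auto simp: bf_def)
  have kA: "AE z in lborel \<Otimes>\<^sub>M lborel. norm (k (snd z)) \<le> B2"
    using k by (intro AE_snd_prod) (auto simp: bf_def)
  have "\<bar>Q h k\<bar> \<le> (\<integral> z. norm (F z) \<partial>(lborel \<Otimes>\<^sub>M lborel))"
    unfolding Q_def F_def[symmetric] using integral_norm_bound[of "lborel \<Otimes>\<^sub>M lborel" F] by simp
  also have "\<dots> \<le> (\<integral> z. indicator ({0..pi} \<times> {0..pi}) z * (\<bar>C\<bar> * (\<bar>B1\<bar> * \<bar>B2\<bar>)) \<partial>(lborel \<Otimes>\<^sub>M lborel))"
  proof (rule integral_mono_AE')
    have "emeasure lborel ({0..pi} \<times> {0..pi::real}) < \<infinity>"
      by (intro emeasure_bounded_finite bounded_Times) auto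
    then have "emeasure (lborel \<Otimes>\<^sub>M lborel) ({0..pi} \<times> {0..pi::real}) < \<infinity>"
      by (simp add: lborel_prod)
    then show "integrable (lborel \<Otimes>\<^sub>M lborel) (\<lambda>z. indicator ({0..pi} \<times> {0..pi}) z * (\<bar>C\<bar> * (\<bar>B1\<bar> * \<bar>B2\<bar>)) :: real)"
      by (intro integrable_mult_left integrable_real_indicator) auto
    show "AE z in lborel \<Otimes>\<^sub>M lborel. norm (F z) \<le> indicator ({0..pi} \<times> {0..pi}) z * (\<bar>C\<bar> * (\<bar>B1\<bar> * \<bar>B2\<bar>))"
      using hA kA p_bdd2
    proof eventually_elim
      case (elim z)
      have "norm (F z) \<le> indicator ({0..pi} \<times> {0..pi}) z * (\<bar>p z\<bar> * (norm (h (fst z)) * norm (k (snd z))))"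
        using cross2_bound[of "h (fst z)" "k (snd z)"]
        by (cases z) (auto simp: F_def abs_mult split: split_indicator intro!: mult_left_mono)
      also have "\<dots> \<le> indicator ({0..pi} \<times> {0..pi}) z * (\<bar>C\<bar> * (\<bar>B1\<bar> * \<bar>B2\<bar>))"
        using elim by (intro mult_left_mono mult_mono) auto
      finally show ?case .
    qed
  qed auto
  finally show ?thesis .
qed

end



lemma bf_scale: "bf f B \<Longrightarrow> bf (\<lambda>a. t *\<^sub>R f a) (\<bar>t\<bar> * B)"
  unfolding bf_def by (auto elim!: eventually_mono intro: mult_left_mono)

context pker begin

lemma opt_core:
  assumes gb: "bf g 1" and anti: "AE x in lborel. g (x + pi) = - g x"
    and maxi: "\<And>\<eta>. Binf_ap \<eta> \<Longrightarrow> omega_p p \<eta> \<le> omega_p p g"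
  shows "AE a in lborel. g a \<bullet> mu g a = 0 \<and> cross2 (g a) (mu g a) \<ge> 0"
proof -
  have [measurable]: "g \<in> borel_measurable borel" using gb by (simp add: bf_def)
  have [measurable]: "mu g \<in> borel_measurable borel" by (rule mu_meas[OF gb])
  define D where "D a = g a \<bullet> mu g a" for a
  define X where "X a = cross2 (g a) (mu g a)" for a
  define \<sigma> where "\<sigma> a = (if X a < 0 then 1 else 0 :: real)" for a
  define \<theta> where "\<theta> a = - sgn (D a)" for a
  have [measurable]: "D \<in> borel_measurable borel" unfolding D_def[abs_def] by measurable
  have [measurable]: "X \<in> borel_measurable borel" unfolding X_def[abs_def] by measurable
  have [measurable]: "\<sigma> \<in> borel_measurable borel" unfolding \<sigma>_def[abs_def] by measurable
  have [measurable]: "\<theta> \<in> borel_measurable borel" unfolding \<theta>_def[abs_def] by measurable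
  define v where "v t a = (- (t + \<sigma> a)) *\<^sub>R g a + \<theta> a *\<^sub>R J (g a)" for t a
  have gA: "AE a in lborel. norm (g a) \<le> 1" using gb by (simp add: bf_def)
  have s01: "\<sigma> a = 0 \<or> \<sigma> a = 1" for a by (simp add: \<sigma>_def)
  have th1: "\<bar>\<theta> a\<bar> \<le> 1" for a by (simp add: \<theta>_def sgn_real_def)
  have vb: "bf (v t) 3" if t: "0 \<le> t" "t \<le> 1" for t
    unfolding bf_def
  proof
    show "v t \<in> borel_measurable borel" unfolding v_def[abs_def] by measurable
    show "AE x in lborel. norm (v t x) \<le> 3"
      using gA
    proof eventually_elim
      case (elim a)
      have "norm (v t a) \<le> \<bar>t + \<sigma> a\<bar> * norm (g a) + \<bar>\<theta> a\<bar> * norm (J (g a))"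
        unfolding v_def using norm_triangle_ineq[of "(- (t + \<sigma> a)) *\<^sub>R g a" "\<theta> a *\<^sub>R J (g a)"] abs_minus_cancel[of "t + \<sigma> a"] by (simp del: abs_minus_cancel)
      also have "\<dots> \<le> 2 * 1 + 1 * 1"
        using elim t s01[of a] th1[of a] by (intro add_mono mult_mono) (auto simp: norm_J)
      finally show ?case by simp
    qed
  qed
  have mu_per: "mu g (a + pi) = - mu g a" for a by (rule mu_anti[OF gb anti])
  have per: "AE a in lborel. D (a + pi) = D a \<and> X (a + pi) = X a \<and> \<sigma> (a + pi) = \<sigma> a \<and> \<theta> (a + pi) = \<theta> a"
    using anti by eventually_elim (simp add: D_def X_def \<sigma>_def \<theta>_def mu_per cross2_def)
  have gv: "g a + t *\<^sub>R v t a = (1 - t^2 - t * \<sigma> a) *\<^sub>R g a + (t * \<theta> a) *\<^sub>R J (g a)" for t a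
    unfolding v_def by (simp add: algebra_simps power2_eq_square scaleR_add_right)
  have comp: "Binf_ap (\<lambda>a. g a + t *\<^sub>R v t a)" if t: "0 < t" "t \<le> 1/2" for t
  proof -
    have sq: "AE a in lborel. (fst (g a + t *\<^sub>R v t a))\<^sup>2 + (snd (g a + t *\<^sub>R v t a))\<^sup>2 \<le> 1"
      using gA by eventually_elim (unfold gv, rule comp_norm[OF _ t s01 th1])
    have nb: "AE a in lborel. norm (g a + t *\<^sub>R v t a) \<le> 1"
      using sq by eventually_elim (simp add: norm_sq_pair)
    have an: "AE a in lborel. g (a + pi) + t *\<^sub>R v t (a + pi) = - (g a + t *\<^sub>R v t a)"
      using anti per by eventually_elim (simp add: v_def J_neg algebra_simps)
    show ?thesis unfolding Binf_ap_def Linf_ap_def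
      using sq nb an by (auto simp: v_def[abs_def])
  qed
  define K where "K = (\<integral> z. indicator ({0..pi} \<times> {0..pi}) z * (\<bar>C\<bar> * (\<bar>3::real\<bar> * \<bar>3\<bar>)) \<partial>(lborel \<Otimes>\<^sub>M lborel))"
  define FA where "FA a = indicator {0..pi} a * (\<bar>D a\<bar> - \<sigma> a * X a)" for a
  define FB where "FB a = indicator {0..pi} a * X a" for a
  define A where "A = integral\<^sup>L lborel FA"
  define Bc where "Bc = integral\<^sup>L lborel FB"
  define M where "M = \<bar>C\<bar> * \<bar>1\<bar> * pi"
  have muA: "AE a in lborel. norm (mu g a) \<le> M" unfolding M_def by (rule mu_bdd[OF gb])
  have DX: "AE a in lborel. \<bar>D a\<bar> \<le> M \<and> \<bar>X a\<bar> \<le> M"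
    using muA gA
  proof eventually_elim
    case (elim a)
    have "norm (g a) * norm (mu g a) \<le> 1 * M" using elim by (intro mult_mono) auto
    then show ?case
      using Cauchy_Schwarz_ineq2[of "g a" "mu g a"] cross2_bound[of "g a" "mu g a"]
      by (auto simp: D_def X_def)
  qed
  have IA: "integrable lborel FA"
  proof -
    have "integrable lborel (\<lambda>a. indicator {0..pi} a *\<^sub>R (\<bar>D a\<bar> - \<sigma> a * X a))"
    proof (rule int_bdd[where B="2 * M"])
      show "(\<lambda>a. \<bar>D a\<bar> - \<sigma> a * X a) \<in> borel_measurable borel" by measurable
      show "AE x in lborel. norm (\<bar>D x\<bar> - \<sigma> x * X x) \<le> 2 * M"
        using DX by eventually_elim (auto simp: \<sigma>_def)
    qed auto
    then show ?thesis by (simp add: FA_def[abs_def])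
  qed
  have IB: "integrable lborel FB"
  proof -
    have "integrable lborel (\<lambda>a. indicator {0..pi} a *\<^sub>R X a)"
    proof (rule int_bdd[where B="M"])
      show "AE x in lborel. norm (X x) \<le> M"
        using DX by eventually_elim auto
    qed auto
    then show ?thesis by (simp add: FB_def[abs_def])
  qed
  have FA0: "0 \<le> FA a" for a
    by (auto simp: FA_def \<sigma>_def split: split_indicator)
  have key: "A \<le> t * (\<bar>K\<bar> + \<bar>Bc\<bar>)" if t: "0 < t" "t \<le> 1/2" for t
  proof -
    have hb: "bf (\<lambda>a. t *\<^sub>R v t a) (\<bar>t\<bar> * 3)" by (rule bf_scale[OF vb]) (use t in auto)
    have "omega_p p (\<lambda>a. g a + t *\<^sub>R v t a) \<le> omega_p p g" by (rule maxi[OF comp[OF t]])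
    then have le: "omega_p p (\<lambda>a. t *\<^sub>R v t a) + (\<integral> a. indicator {0..pi} a * cross2 (t *\<^sub>R v t a) (mu g a) \<partial>lborel) \<le> 0"
      unfolding main_expand[OF gb hb anti] by simp
    have om: "omega_p p (\<lambda>a. t *\<^sub>R v t a) = t * t * Q (v t) (v t)"
      unfolding W[OF hb] by (rule Q_scale)
    have QK: "\<bar>Q (v t) (v t)\<bar> \<le> K"
      unfolding K_def by (rule Qbound[OF vb vb]) (use t in auto)
    have pt: "indicator {0..pi} a * cross2 (t *\<^sub>R v t a) (mu g a) = t * FA a - t * t * FB a" for a
    proof -
      have "cross2 (v t a) (mu g a) = - (t + \<sigma> a) * X a + \<theta> a * (- D a)"
        unfolding v_def cross2_add_left cross2_scale_left cross2_J X_def D_def by simp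
      also have "\<theta> a * (- D a) = \<bar>D a\<bar>" by (simp add: \<theta>_def abs_sgn)
      finally have c: "cross2 (v t a) (mu g a) = \<bar>D a\<bar> - (t + \<sigma> a) * X a" by (simp add: algebra_simps)
      show ?thesis
        by (simp add: FA_def FB_def cross2_scale_left c algebra_simps)
    qed
    have lin: "(\<integral> a. indicator {0..pi} a * cross2 (t *\<^sub>R v t a) (mu g a) \<partial>lborel) = t * A - t * t * Bc"
      unfolding pt A_def Bc_def
      using IA IB by simp
    have "t * t * Q (v t) (v t) + (t * A - t * t * Bc) \<le> 0" using le om lin by simp
    moreover have "t * t * (- K) \<le> t * t * Q (v t) (v t)"
      using QK t by (intro mult_left_mono) auto
    moreover have "t * t * Bc \<le> t * t * \<bar>Bc\<bar>" "t * t * K \<le> t * t * \<bar>K\<bar>"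
      by (intro mult_left_mono; simp)+
    ultimately have "t * A \<le> t * t * \<bar>K\<bar> + t * t * \<bar>Bc\<bar>"
      by (simp only: mult_minus_right)
    also have "\<dots> = t * (t * (\<bar>K\<bar> + \<bar>Bc\<bar>))" by (simp add: algebra_simps)
    finally have "t * A \<le> t * (t * (\<bar>K\<bar> + \<bar>Bc\<bar>))" .
    then show ?thesis using t by simp
  qed
  have A0: "0 \<le> A" unfolding A_def using FA0 by (simp add: integral_nonneg)
  have "A \<le> 0"
  proof (rule ccontr)
    assume "\<not> A \<le> 0"
    then have Ap: "0 < A" by simp
    define t where "t = min (1/2) (A / (2 * (\<bar>K\<bar> + \<bar>Bc\<bar> + 1)))"
    have "0 < A / (2 * (\<bar>K\<bar> + \<bar>Bc\<bar> + 1))" using Ap by (intro divide_pos_pos) auto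
    then have "0 < t" by (simp add: t_def)
    moreover have "t \<le> 1/2" unfolding t_def by (rule min.cobounded1)
    ultimately have t0: "0 < t" "t \<le> 1/2" by auto
    have "t * (\<bar>K\<bar> + \<bar>Bc\<bar>) \<le> A / (2 * (\<bar>K\<bar> + \<bar>Bc\<bar> + 1)) * (\<bar>K\<bar> + \<bar>Bc\<bar> + 1)"
      using t0 by (intro mult_mono) (auto simp: t_def)
    also have "\<dots> = A / 2" by (simp add: field_simps)
    finally show False using key[OF t0] Ap by simp
  qed
  with A0 have "A = 0" by simp
  then have "AE a in lborel. FA a = 0"
    unfolding A_def using integral_nonneg_eq_0_iff_AE[OF IA] FA0 by simp
  then have base: "AE a in lborel. a \<in> {0..pi} \<longrightarrow> (D a = 0 \<and> 0 \<le> X a)"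
  proof eventually_elim
    case (elim a)
    show ?case
    proof
      assume "a \<in> {0..pi}"
      then have "\<bar>D a\<bar> - \<sigma> a * X a = 0" using elim by (simp add: FA_def)
      then show "D a = 0 \<and> 0 \<le> X a" by (auto simp: \<sigma>_def split: if_splits)
    qed
  qed
  have "AE a in lborel. D a = 0 \<and> 0 \<le> X a"
  proof (rule AE_periodic_ext[OF _ base])
    show "Measurable.pred borel (\<lambda>a. D a = 0 \<and> 0 \<le> X a)" by measurable
    show "AE a in lborel. (D (a + pi) = 0 \<and> 0 \<le> X (a + pi)) = (D a = 0 \<and> 0 \<le> X a)"
      using per by eventually_elim simp
  qed
  then show ?thesis by (simp add: D_def X_def)
qed

end



theorem lemma4p4:
  fixes p :: "real \<times> real \<Rightarrow> real" and \<gamma> :: "real \<Rightarrow> real \<times> real"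
  assumes p_meas: "p \<in> borel_measurable borel"
    and p_pos: "AE x in lborel. p x > 0"
    and p_sym: "\<And>a b. p (a, b) = p (b, a)"
    and p_per: "\<And>a b. p (a + pi, b) = p (a, b) \<and> p (a, b + pi) = p (a, b)"
    and p_bdd: "\<exists>C. AE x in lborel. \<bar>p x\<bar> \<le> C"
    and \<gamma>_in: "Binf_ap \<gamma>"
    and \<gamma>_max: "\<And>\<eta>. Binf_ap \<eta> \<Longrightarrow> omega_p p \<eta> \<le> omega_p p \<gamma>"
  shows "Linf_ap (\<lambda>a. LBINT b=a..a+pi. p (a, b) *\<^sub>R \<gamma> b)
    \<and> (AE a in lborel. \<gamma> a \<bullet> (LBINT b=a..a+pi. p (a, b) *\<^sub>R \<gamma> b) = 0
          \<and> cross2 (\<gamma> a) (LBINT b=a..a+pi. p (a, b) *\<^sub>R \<gamma> b) \<ge> 0)"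
proof -
  obtain C where pC: "AE x in lborel. \<bar>p x\<bar> \<le> C" using p_bdd by blast
  interpret pker p C using p_meas p_sym p_per pC by unfold_locales auto
  have gm: "\<gamma> \<in> borel_measurable borel" and anti: "AE a in lborel. \<gamma> (a + pi) = - \<gamma> a"
    and sq: "AE x in lborel. (fst (\<gamma> x))\<^sup>2 + (snd (\<gamma> x))\<^sup>2 \<le> 1"
    using \<gamma>_in by (auto simp: Binf_ap_def Linf_ap_def)
  have "AE x in lborel. norm (\<gamma> x) \<le> 1"
    using sq by eventually_elim (simp add: norm_sq_pair)
  with gm have gb: "bf \<gamma> 1" by (simp add: bf_def)
  have L: "Linf_ap (mu \<gamma>)"
    unfolding Linf_ap_def
    using mu_meas[OF gb] mu_bdd[OF gb] mu_anti[OF gb anti] by auto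
  have O: "AE a in lborel. \<gamma> a \<bullet> mu \<gamma> a = 0 \<and> cross2 (\<gamma> a) (mu \<gamma> a) \<ge> 0"
    by (rule opt_core[OF gb anti \<gamma>_max])
  have eq: "(\<lambda>a. LBINT b=a..a+pi. p (a, b) *\<^sub>R \<gamma> b) = mu \<gamma>"
    by (rule ext) (simp only: mu_def)
  have eq2: "\<And>a. (LBINT b=a..a+pi. p (a, b) *\<^sub>R \<gamma> b) = mu \<gamma> a"
    by (simp only: mu_def)
  show ?thesis unfolding eq eq2 using L O by blast
qed


end
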